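(* Let $M\ge 3$ be an integer, let $c>0$, $f_c>0$, $d>0$, $R_D>0$ and $\theta_D\in(-\pi/2,\pi/2)$. Take all frequency offsets zero, i.e. $\Delta f_m=0$ for all $m$, so that $\xi_m=-\frac{d^2 f_c}{2R_D^2}(m-1)^2$ for $m=1,\dots,M$, and define $$X=\frac{4\pi^2}{c^2}\sum_{m=1}^M\sum_{n=1}^M(\xi_m-\xi_n)^2,\qquad Y=\frac{4\pi^2 d f_c\cos\theta_D}{c^2}\sum_{m=1}^M\sum_{n=1}^M (\xi_m-\xi_n)(m-n),\qquad Z=\frac{4\pi^2 f_c^2 d^2\cos^2\theta_D}{c^2}\sum_{m=1}^M\sum_{n=1}^M (m-n)^2 .$$ Let $E=\{(R,\theta)\in\mathbb{R}^2: X(R-R_D)^2+2Y(R-R_D)(\theta-\theta_D)+Z(\theta-\theta_D)^2=M^2\}$. Then $XZ>Y^2$, $E$ is an ellipse centred at $(R_D,\theta_D)$, and the area $S$ it encloses, the range extent $\Delta_R=\max_E R-\min_E R$ and the angular extent $\Delta_\theta=\max_E\theta-\min_E\theta$ are $$S=\frac{3\sqrt{15}\,c^2R_D^2}{\pi f_c^2 d^3\cos\theta_D\,(M^2-1)\sqrt{M^2-4}},\qquad \Delta_R=\frac{6\sqrt{10}\,cR_D^2}{\pi f_c d^2\sqrt{(M^2-1)(M^2-4)}},$$ $$\Delta_\theta=\frac{c\sqrt{6(16M^2-30M+11)}}{\pi f_c d\cos\theta_D\sqrt{(M^2-1)(M^2-4)}} .$$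
   Context: Physical setting: a conventional phased uniform linear array ($M$ antennas, spacing $d$, carrier $f_c$, no frequency offsets) focusing on a target at range $R_D$, angle $\theta_D$; $E$ models the half-power boundary of the beampattern in the (range, angle) plane, with $S$ its area and $\Delta_R$, $\Delta_\theta$ the main-lobe beamwidths in range and angle. *)

theory Defs
  imports "HOL-Analysis.Analysis"
begin

definition is_ellipse_centred :: "(real \<times> real) set \<Rightarrow> real \<times> real \<Rightarrow> bool" where
  "is_ellipse_centred E c \<longleftrightarrow>
     (\<exists>a b phi. a > 0 \<and> b > 0 \<and>
        E = {(fst c + a * cos t * cos phi - b * sin t * sin phi,
              snd c + a * cos t * sin phi + b * sin t * cos phi) | t. True})"

definition xi :: "real \<Rightarrow> real \<Rightarrow> real \<Rightarrow> nat \<Rightarrow> real" where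
  "xi d fc RD m = - (d^2 * fc / (2 * RD^2)) * (real m - 1)^2"

definition Xc :: "nat \<Rightarrow> real \<Rightarrow> real \<Rightarrow> real \<Rightarrow> real \<Rightarrow> real" where
  "Xc M c fc d RD = 4 * pi^2 / c^2 *
      (\<Sum>m\<in>{1..M}. \<Sum>n\<in>{1..M}. (xi d fc RD m - xi d fc RD n)^2)"

definition Yc :: "nat \<Rightarrow> real \<Rightarrow> real \<Rightarrow> real \<Rightarrow> real \<Rightarrow> real \<Rightarrow> real" where
  "Yc M c fc d RD thD = 4 * pi^2 * d * fc * cos thD / c^2 *
      (\<Sum>m\<in>{1..M}. \<Sum>n\<in>{1..M}. (xi d fc RD m - xi d fc RD n) * (real m - real n))"

definition Zc :: "nat \<Rightarrow> real \<Rightarrow> real \<Rightarrow> real \<Rightarrow> real \<Rightarrow> real" where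
  "Zc M c fc d thD = 4 * pi^2 * fc^2 * d^2 * (cos thD)^2 / c^2 *
      (\<Sum>m\<in>{1..M}. \<Sum>n\<in>{1..M}. (real m - real n)^2)"

end

theory Submission
  imports Defs
begin

lemma section_meas:
  fixes A B C r u y0 :: real
  assumes C: "C > 0" and D: "A * C - B^2 > 0"
  shows "emeasure lborel {y. C * (y-y0)^2 + 2 * B * u * (y-y0) + A * u^2 \<le> r^2}
       = ennreal (2 * sqrt (max 0 (C * r^2 - (A * C-B^2) * u^2)) / C)"
proof -
  define D where "D = A * C - B^2"
  define K where "K = C * r^2 - D * u^2"
  have key: "C * (C * (y-y0)^2 + 2 * B * u * (y-y0) + A * u^2) = (C * (y-y0) + B * u)^2 + D * u^2" for y
    unfolding D_def by (simp add: power2_eq_square algebra_simps)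
  have iff: "(C * (y-y0)^2 + 2 * B * u * (y-y0) + A * u^2 \<le> r^2) \<longleftrightarrow> (C * (y-y0) + B * u)^2 \<le> K" for y
  proof -
    have "(C * (y-y0)^2 + 2 * B * u * (y-y0) + A * u^2 \<le> r^2) \<longleftrightarrow> C * (C * (y-y0)^2 + 2 * B * u * (y-y0) + A * u^2) \<le> C * r^2"
      using C by simp
    also have "\<dots> \<longleftrightarrow> (C * (y-y0) + B * u)^2 \<le> K" unfolding key K_def by linarith
    finally show ?thesis .
  qed
  show ?thesis
  proof (cases "K \<ge> 0")
    case True
    define q where "q = sqrt K / C"
    have q0: "q \<ge> 0" unfolding q_def using True C by simp
    have "{y. C * (y-y0)^2 + 2 * B * u * (y-y0) + A * u^2 \<le> r^2} = {y0 - B * u/C - q .. y0 - B * u/C + q}"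
    proof (intro set_eqI)
      fix y
      have "(C * (y-y0) + B * u)^2 \<le> K \<longleftrightarrow> \<bar>C * (y-y0) + B * u\<bar> \<le> sqrt K"
        using True by (metis real_sqrt_abs real_sqrt_le_iff real_sqrt_le_mono abs_ge_zero real_sqrt_pow2 power2_le_iff_abs_le real_sqrt_ge_zero)
      also have "\<dots> \<longleftrightarrow> \<bar>(y - (y0 - B * u/C))\<bar> * C \<le> q * C"
      proof -
        have "C * (y-y0) + B * u = (y - (y0 - B * u/C)) * C" using C by (simp add: field_simps)
        then show ?thesis unfolding q_def using C by (simp add: abs_mult)
      qed
      also have "\<dots> \<longleftrightarrow> \<bar>(y - (y0 - B * u/C))\<bar> \<le> q" using C by simp
      also have "\<dots> \<longleftrightarrow> y \<in> {y0 - B * u/C - q .. y0 - B * u/C + q}" by auto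
      finally show "y \<in> {y. C * (y-y0)^2 + 2 * B * u * (y-y0) + A * u^2 \<le> r^2} \<longleftrightarrow> y \<in> {y0 - B * u/C - q .. y0 - B * u/C + q}"
        using iff by simp
    qed
    moreover have "max 0 (C * r^2 - (A * C-B^2) * u^2) = K" using True unfolding K_def D_def by simp
    ultimately show ?thesis using q0 by (simp add: q_def)
  next
    case False
    have "{y. C * (y-y0)^2 + 2 * B * u * (y-y0) + A * u^2 \<le> r^2} = {}"
      using iff False by (auto intro: order_trans[OF zero_le_power2])
    moreover have "max 0 (C * r^2 - (A * C-B^2) * u^2) = 0" using False unfolding K_def D_def by simp
    ultimately show ?thesis by simp
  qed
qed

lemma Beta_half: "Beta (1/2) (real 1 / 2 + 1) = pi / 2"
proof -
  have n: "(1/2::real) \<notin> \<int>\<^sub>\<le>\<^sub>0" by (auto dest: nonpos_Ints_nonpos)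
  have "Gamma (1/2 + 1::real) = 1/2 * Gamma (1/2)" using Gamma_plus1[of "1/2::real"] n by simp
  then have g: "Gamma (3/2::real) = 1/2 * sqrt pi"
    using Gamma_one_half_real by simp
  have g2: "Gamma (2::real) = 1" using Gamma_fact[of 1] by simp
  have "Beta (1/2) (real 1 / 2 + 1) = sqrt pi * (1/2 * sqrt pi)" proof -
    have e: "real 1 / 2 + 1 = (3/2::real)" "(1/2::real) + 3/2 = 2" by simp_all
    show ?thesis unfolding Beta_def e g g2 Gamma_one_half_real by simp
  qed
  also have "\<dots> = pi / 2" by simp
  finally show ?thesis .
qed
lemma ell_measure:
  fixes A B C r x0 y0 :: real
  assumes A: "A > 0" and D: "A * C - B^2 > 0" and r: "r > 0"
  shows "measure lebesgue {(x, y). A * (x-x0)^2 + 2 * B * (x-x0) * (y-y0) + C * (y-y0)^2 \<le> r^2}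
         = pi * r^2 / sqrt (A * C - B^2)"
proof -
  define D where "D = A * C - B^2"
  have D0: "D > 0" using D D_def by simp
  have C: "C > 0"
  proof (rule ccontr)
    assume "\<not> C > 0" then have "A * C \<le> 0" using A by (simp add: mult_nonpos_nonneg mult_le_0_iff)
    then show False using D by (smt (verit) zero_le_power2)
  qed
  define S where "S = {(x, y). A * (x-x0)^2 + 2 * B * (x-x0) * (y-y0) + C * (y-y0)^2 \<le> r^2}"
  have Seq: "S = {p. A * (fst p-x0)^2 + 2 * B * (fst p-x0) * (snd p-y0) + C * (snd p-y0)^2 \<le> r^2}"
    unfolding S_def by auto
  have "closed S" unfolding Seq
    by (intro closed_Collect_le continuous_intros)
  then have Sb: "S \<in> sets borel" by (rule borel_closed)
  have se: "sets (lborel \<Otimes>\<^sub>M lborel) = sets (lborel :: (real \<times> real) measure)"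
    by (simp only: lborel_prod)
  have Sl: "S \<in> sets (lborel \<Otimes>\<^sub>M lborel)" unfolding se using Sb by simp
  define G where "G x = ennreal (2 * sqrt (max 0 (C * r^2 - D * (x-x0)^2)) / C)" for x
  have sec: "emeasure lborel (Pair x -` S) = G x" for x
  proof -
    have "Pair x -` S = {y. C * (y-y0)^2 + 2 * B * (x-x0) * (y-y0) + A * (x-x0)^2 \<le> r^2}"
      unfolding S_def by (auto simp: algebra_simps)
    then show ?thesis using section_meas[OF C D, of y0 "x-x0" r] unfolding G_def D_def by simp
  qed
  have "emeasure lebesgue S = emeasure lborel S" using Sb by simp
  also have "\<dots> = emeasure (lborel \<Otimes>\<^sub>M lborel) S" by (simp add: lborel_prod)
  also have "\<dots> = (\<integral>\<^sup>+x. G x \<partial>lborel)"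
    using lborel.emeasure_pair_measure_alt[OF Sl] sec by simp
  also have "\<dots> = ennreal (pi * r^2 / sqrt D)"
  proof -
    define w where "w = r * sqrt (C / D)"
    have w0: "w > 0" unfolding w_def using r C D0 by simp
    have w2: "w^2 = r^2 * C / D" unfolding w_def using C D0 by (simp add: power_mult_distrib)
    have Gm: "G \<in> borel_measurable borel" unfolding G_def by measurable
    have "(\<integral>\<^sup>+x. G x \<partial>lborel) = \<bar>w\<bar> * (\<integral>\<^sup>+s. G (x0 + w * s) \<partial>lborel)"
      by (rule nn_integral_real_affine[OF Gm]) (use w0 in simp)
    also have "(\<lambda>s. G (x0 + w * s)) = (\<lambda>s. ennreal (2 * r / sqrt C) * ennreal (indicator {-1..1} s * sqrt (1 - s^2) ^ 1))"
    proof
      fix s :: real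
      have e: "C * r^2 - D * (x0 + w * s - x0)^2 = C * r^2 * (1 - s^2)"
        using w2 D0 by (simp add: power_mult_distrib field_simps)
      show "G (x0 + w * s) = ennreal (2 * r / sqrt C) * ennreal (indicator {-1..1} s * sqrt (1 - s^2) ^ 1)"
      proof (cases "s \<in> {-1..1}")
        case True
        then have "s^2 \<le> 1" by (simp add: abs_square_le_1 abs_le_iff)
        then have "sqrt (C * r^2 * (1 - s^2)) = sqrt C * r * sqrt (1 - s^2)"
          using r C by (simp add: real_sqrt_mult)
        moreover have "max 0 (C * r^2 * (1 - s^2)) = C * r^2 * (1 - s^2)" using \<open>s^2 \<le> 1\<close> C by simp
        ultimately have "G (x0 + w * s) = ennreal (2 * (sqrt C * r * sqrt (1 - s^2)) / C)"
          unfolding G_def e by simp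
        also have "2 * (sqrt C * r * sqrt (1 - s^2)) / C = (2 * r / sqrt C) * sqrt (1 - s^2)"
        proof -
          have "C = sqrt C * sqrt C" using C by simp
          then show ?thesis using C by (metis (no_types, lifting) divide_divide_eq_left' mult.assoc mult.commute nonzero_mult_div_cancel_left real_sqrt_eq_zero_cancel_iff times_divide_eq_right less_irrefl)
        qed
        also have "ennreal ((2 * r / sqrt C) * sqrt (1 - s^2)) = ennreal (2 * r / sqrt C) * ennreal (sqrt (1 - s^2))"
          by (intro ennreal_mult) (use r C \<open>s^2 \<le> 1\<close> in auto)
        finally show ?thesis using True by simp
      next
        case False
        then have "1 < \<bar>s\<bar>" by auto
        then have "1 * 1 < \<bar>s\<bar> * \<bar>s\<bar>" by (intro mult_strict_mono) auto
        then have "s^2 > 1" by (simp add: power2_eq_square abs_mult_self_eq)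
        then have "max 0 (C * r^2 * (1 - s^2)) = 0" using C r
          by (simp add: mult_nonneg_nonpos)
        then show ?thesis unfolding G_def e using False by simp
      qed
    qed
    also have "(\<integral>\<^sup>+s. ennreal (2 * r / sqrt C) * ennreal (indicator {-1..1} s * sqrt (1 - s^2) ^ 1) \<partial>lborel)
        = ennreal (2 * r / sqrt C) * ennreal (pi / 2)"
    proof -
      have I: "(\<integral>\<^sup>+s. ennreal (indicator {-1..1} s * sqrt (1 - s^2)) \<partial>lborel) = ennreal (pi / 2)"
      proof -
        have e: "real 1 / 2 + 1 = (3/2::real)" by simp
        have b: "Beta (1/2) (3/2::real) = pi/2" using Beta_half unfolding e .
        show ?thesis using emeasure_cball_aux_integral[of 1, unfolded e b] by simp
      qed
      show ?thesis by (subst nn_integral_cmult) (auto simp: I)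
    qed
    also have "ennreal \<bar>w\<bar> * (ennreal (2 * r / sqrt C) * ennreal (pi / 2)) = ennreal (w * (2 * r / sqrt C) * (pi/2))"
      using w0 r C by (simp add: ennreal_mult[symmetric] mult.assoc del: ennreal_mult')
    also have "w * (2 * r / sqrt C) * (pi/2) = pi * r^2 / sqrt D"
      unfolding w_def using C D0 by (simp add: real_sqrt_divide power2_eq_square field_simps)
    finally show ?thesis by simp
  qed
  finally have "emeasure lebesgue S = ennreal (pi * r^2 / sqrt D)" .
  then have "measure lebesgue S = pi * r^2 / sqrt D" unfolding measure_def using D0 r by simp
  then show ?thesis unfolding S_def D_def .
qed

lemma quad_pos:
  fixes A B C x y :: real
  assumes A: "A > 0" and D: "A * C - B^2 > 0" and nz: "x \<noteq> 0 \<or> y \<noteq> 0"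
  shows "A * x^2 + 2 * B * x * y + C * y^2 > 0"
proof -
  have e: "A * (A * x^2 + 2 * B * x * y + C * y^2) = (A * x + B * y)^2 + (A * C - B^2) * y^2"
    by (simp add: power2_eq_square algebra_simps)
  have "(A * x + B * y)^2 + (A * C - B^2) * y^2 > 0"
  proof (cases "y = 0")
    case True then have "x \<noteq> 0" using nz by simp
    then show ?thesis using True A by simp
  next
    case False then show ?thesis using D by (simp add: add_nonneg_pos)
  qed
  then have "A * (A * x^2 + 2 * B * x * y + C * y^2) > 0" unfolding e .
  then show ?thesis using A by (simp add: zero_less_mult_iff)
qed

lemma quad_rot:
  fixes A B C P R c s :: real
  shows "A * (P * c - R * s)^2 + 2 * B * (P * c - R * s) * (P * s + R * c) + C * (P * s + R * c)^2
     = P^2 * (A * c^2 + 2 * B * c * s + C * s^2) + R^2 * (A * s^2 - 2 * B * c * s + C * c^2)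
       + 2 * P * R * ((C-A) * c * s + B * (c^2 - s^2))"
  by (simp add: power2_eq_square algebra_simps)

lemma exists_phi:
  fixes A B C :: real
  obtains phi where "(C-A) * cos phi * sin phi + B * (cos phi^2 - sin phi^2) = 0"
proof (cases "(A-C)^2 + 4 * B^2 = 0")
  case True
  have "(A-C)^2 = 0" "B^2 = 0" using True zero_le_power2[of "A-C"] zero_le_power2[of B] by linarith+
  then have "A = C" "B = 0" by simp_all
  then show ?thesis using that[of 0] by simp
next
  case False
  define h where "h = sqrt ((A-C)^2 + 4 * B^2)"
  have h0: "h > 0" unfolding h_def using False
    by (metis add_nonneg_nonneg real_sqrt_gt_zero zero_le_power2 mult_nonneg_nonneg zero_le_numeral order_le_neq_trans)
  have h2: "h^2 = (A-C)^2 + 4 * B^2" unfolding h_def by simp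
  have "((A-C)/h)^2 + (2 * B/h)^2 = ((A-C)^2 + 4 * B^2) / h^2"
    by (simp add: power_divide add_divide_distrib power_mult_distrib)
  also have "\<dots> = 1" using h2 h0 False by simp
  finally have "((A-C)/h)^2 + (2 * B/h)^2 = 1" .
  then obtain psi where p: "(A-C)/h = cos psi" "2 * B/h = sin psi" by (rule sincos_total_2pi)
  define phi where "phi = psi/2"
  have cd: "cos phi^2 - sin phi^2 = cos psi" using cos_double[of phi] unfolding phi_def by simp
  have sd: "2 * sin phi * cos phi = sin psi" using sin_double[of phi] unfolding phi_def by simp
  have cs2: "cos phi * sin phi = sin psi / 2" using sd by (simp add: mult_ac)
  have "(C-A) * cos phi * sin phi + B * (cos phi^2 - sin phi^2) = (C-A) * (cos phi * sin phi) + B * (cos phi^2 - sin phi^2)"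
    by (simp add: mult.assoc)
  also have "\<dots> = (C-A) * (sin psi/2) + B * cos psi" unfolding cs2 cd ..
  also have "\<dots> = 0" unfolding p[symmetric] using h0 by (simp add: field_simps)
  finally show ?thesis by (rule that)
qed

lemma ell_shape:
  fixes A B C r x0 y0 :: real
  assumes A: "A > 0" and D: "A * C - B^2 > 0" and r: "r > 0"
  shows "is_ellipse_centred {(x, y). A * (x-x0)^2 + 2 * B * (x-x0) * (y-y0) + C * (y-y0)^2 = r^2} (x0, y0)"
proof -
  obtain phi where off: "(C-A) * cos phi * sin phi + B * (cos phi^2 - sin phi^2) = 0" by (rule exists_phi)
  define c where "c = cos phi"
  define s where "s = sin phi"
  have cs: "c^2 + s^2 = 1" unfolding c_def s_def by simp
  define l1 where "l1 = A * c^2 + 2 * B * c * s + C * s^2"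
  define l2 where "l2 = A * s^2 - 2 * B * c * s + C * c^2"
  have nz: "c \<noteq> 0 \<or> s \<noteq> 0" using cs by auto
  have l1: "l1 > 0" unfolding l1_def using quad_pos[OF A D nz]
    by (simp add: mult.assoc)
  have nz2: "-s \<noteq> 0 \<or> c \<noteq> 0" using nz by auto
  have l2: "l2 > 0" unfolding l2_def using quad_pos[OF A D nz2]
    by (simp add: algebra_simps)
  define a where "a = r / sqrt l1"
  define b where "b = r / sqrt l2"
  have a: "a > 0" and b: "b > 0" unfolding a_def b_def using r l1 l2 by auto
  have a2: "a^2 * l1 = r^2" unfolding a_def using l1 by (simp add: power_divide)
  have b2: "b^2 * l2 = r^2" unfolding b_def using l2 by (simp add: power_divide)
  have off': "(C-A) * c * s + B * (c^2 - s^2) = 0" using off unfolding c_def s_def .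
  have Q: "A * (P * c - R * s)^2 + 2 * B * (P * c - R * s) * (P * s + R * c) + C * (P * s + R * c)^2 = P^2 * l1 + R^2 * l2" for P R
    unfolding quad_rot l1_def l2_def off' by simp
  have "{(x, y). A * (x-x0)^2 + 2 * B * (x-x0) * (y-y0) + C * (y-y0)^2 = r^2}
     = {(fst (x0,y0) + a * cos t * cos phi - b * sin t * sin phi,
              snd (x0,y0) + a * cos t * sin phi + b * sin t * cos phi) | t. True}"
  proof (intro set_eqI iffI)
    fix p assume "p \<in> {(x, y). A * (x-x0)^2 + 2 * B * (x-x0) * (y-y0) + C * (y-y0)^2 = r^2}"
    then obtain x y where p: "p = (x,y)" and q: "A * (x-x0)^2 + 2 * B * (x-x0) * (y-y0) + C * (y-y0)^2 = r^2" by auto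
    define P where "P = c * (x-x0) + s * (y-y0)"
    define R where "R = -s * (x-x0) + c * (y-y0)"
    have ux0: "P * c - R * s = (x - x0) * (c^2 + s^2)" unfolding P_def R_def
      by (simp add: algebra_simps power2_eq_square)
    have ux: "x - x0 = P * c - R * s" using ux0 cs by simp
    have uy0: "P * s + R * c = (y - y0) * (c^2 + s^2)" unfolding P_def R_def
      by (simp add: algebra_simps power2_eq_square)
    have uy: "y - y0 = P * s + R * c" using uy0 cs by simp
    have PR: "P^2 * l1 + R^2 * l2 = r^2" using q unfolding ux uy Q .
    have a2': "a^2 = r^2 / l1" using a2 l1 by (simp add: field_simps)
    have b2': "b^2 = r^2 / l2" using b2 l2 by (simp add: field_simps)
    have "(P/a)^2 + (R/b)^2 = P^2 * l1 / r^2 + R^2 * l2 / r^2"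
      by (simp add: power_divide a2' b2')
    also have "\<dots> = (P^2 * l1 + R^2 * l2) / r^2" by (simp add: add_divide_distrib)
    also have "\<dots> = 1" unfolding PR using r by simp
    finally have "(P/a)^2 + (R/b)^2 = 1" .
    then obtain t where t: "P/a = cos t" "R/b = sin t" by (rule sincos_total_2pi)
    have Pa: "P = a * cos t" using t(1) a by (simp add: field_simps)
    have Rb: "R = b * sin t" using t(2) b by (simp add: field_simps)
    have xx: "x = x0 + (P * c - R * s)" using ux by simp
    have X1: "x = x0 + a * cos t * cos phi - b * sin t * sin phi"
      using xx unfolding Pa Rb c_def s_def by (simp add: mult.assoc)
    have yy: "y = y0 + (P * s + R * c)" using uy by simp
    have Y1: "y = y0 + a * cos t * sin phi + b * sin t * cos phi"
      using yy unfolding Pa Rb c_def s_def by (simp add: mult.assoc)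
    show "p \<in> {(fst (x0,y0) + a * cos t * cos phi - b * sin t * sin phi,
              snd (x0,y0) + a * cos t * sin phi + b * sin t * cos phi) | t. True}"
      using p X1 Y1 by auto
  next
    fix p assume "p \<in> {(fst (x0,y0) + a * cos t * cos phi - b * sin t * sin phi,
              snd (x0,y0) + a * cos t * sin phi + b * sin t * cos phi) | t. True}"
    then obtain t where p: "p = (x0 + a * cos t * c - b * sin t * s, y0 + a * cos t * s + b * sin t * c)"
      unfolding c_def s_def by auto
    have "A * ((a * cos t) * c - (b * sin t) * s)^2 + 2 * B * ((a * cos t) * c - (b * sin t) * s) * ((a * cos t) * s + (b * sin t) * c) + C * ((a * cos t) * s + (b * sin t) * c)^2
        = (a * cos t)^2 * l1 + (b * sin t)^2 * l2" by (rule Q)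
    also have "\<dots> = (a^2 * l1) * (cos t)^2 + (b^2 * l2) * (sin t)^2"
      by (simp add: power_mult_distrib mult_ac)
    also have "\<dots> = r^2 * ((cos t)^2 + (sin t)^2)" unfolding a2 b2 by (simp only: distrib_left)
    also have "\<dots> = r^2" by simp
    finally have fin: "A * ((a * cos t) * c - (b * sin t) * s)^2 + 2 * B * ((a * cos t) * c - (b * sin t) * s) * ((a * cos t) * s + (b * sin t) * c) + C * ((a * cos t) * s + (b * sin t) * c)^2 = r^2" .
    have d1: "(x0 + a * cos t * c - b * sin t * s) - x0 = (a * cos t) * c - (b * sin t) * s" by simp
    have d2: "(y0 + a * cos t * s + b * sin t * c) - y0 = (a * cos t) * s + (b * sin t) * c" by simp
    show "p \<in> {(x, y). A * (x-x0)^2 + 2 * B * (x-x0) * (y-y0) + C * (y-y0)^2 = r^2}"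
      unfolding p using fin by (simp only: d1 d2 mem_Collect_eq case_prod_conv)
  qed
  then have seteq: "{(x, y). A * (x-x0)^2 + 2 * B * (x-x0) * (y-y0) + C * (y-y0)^2 = r^2}
     = {(fst (x0,y0) + a * cos t * cos phi - b * sin t * sin phi,
              snd (x0,y0) + a * cos t * sin phi + b * sin t * cos phi) | t. True}" .
  show ?thesis unfolding is_ellipse_centred_def
    apply (rule exI[of _ a], rule exI[of _ b], rule exI[of _ phi])
    using a b seteq by blast
qed


lemma ell_ext_x:
  fixes A B C r x0 y0 :: real
  assumes A: "A > 0" and D: "A * C - B^2 > 0" and r: "r > 0"
  defines "E \<equiv> {(x, y). A * (x-x0)^2 + 2 * B * (x-x0) * (y-y0) + C * (y-y0)^2 = r^2}"
  shows "\<exists>xmax xmin. xmax \<in> fst ` E \<and> xmin \<in> fst ` E \<and> (\<forall>x\<in>fst ` E. xmin \<le> x \<and> x \<le> xmax)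
          \<and> xmax - xmin = 2 * r * sqrt (C / (A * C - B^2))"
proof -
  define D where "D = A * C - B^2"
  have D0: "D > 0" using D D_def by simp
  have C: "C > 0"
  proof (rule ccontr)
    assume "\<not> C > 0" then have "A * C \<le> 0" using A by (simp add: mult_le_0_iff)
    then show False using D by (smt (verit) zero_le_power2)
  qed
  define w where "w = r * sqrt (C / D)"
  have w0: "w > 0" unfolding w_def using r C D0 by simp
  have w2: "w^2 = r^2 * C / D" unfolding w_def using C D0 by (simp add: power_mult_distrib)
  have key: "C * (A * u^2 + 2 * B * u * v + C * v^2) = (C * v + B * u)^2 + D * u^2" for u v
    unfolding D_def by (simp add: power2_eq_square algebra_simps)
  have onpt: "(x0 + e, y0 - B * e/C) \<in> E" if "e^2 = w^2" for e
  proof -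
    have "C * (A * e^2 + 2 * B * e * (-B * e/C) + C * (-B * e/C)^2) = D * w^2"
      unfolding key using C that by (simp add: field_simps power2_eq_square)
    also have "\<dots> = C * r^2" using w2 D0 by simp
    finally have "A * e^2 + 2 * B * e * (-B * e/C) + C * (-B * e/C)^2 = r^2" using C by simp
    then show ?thesis unfolding E_def by simp
  qed
  have p1: "x0 + w \<in> fst ` E" using onpt[of w] by force
  have p2: "x0 - w \<in> fst ` E" using onpt[of "-w"] by force
  have bnd: "x0 - w \<le> x \<and> x \<le> x0 + w" if xE: "x \<in> fst ` E" for x
  proof -
    obtain y where "(x, y) \<in> E" using xE by force
    then have q: "A * (x-x0)^2 + 2 * B * (x-x0) * (y-y0) + C * (y-y0)^2 = r^2" unfolding E_def by simp
    have "D * (x-x0)^2 \<le> C * r^2" using key[of "x-x0" "y-y0"] q by (smt (verit) zero_le_power2)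
    moreover have "D * w^2 = C * r^2" using w2 D0 by simp
    ultimately have "D * (x-x0)^2 \<le> D * w^2" by simp
    then have "(x-x0)^2 \<le> w^2" using D0 by simp
    then have "\<bar>x-x0\<bar> \<le> w" using w0 by (metis abs_le_square_iff abs_of_pos)
    then show ?thesis by auto
  qed
  show ?thesis
    by (rule exI[of _ "x0 + w"], rule exI[of _ "x0 - w"]) (use p1 p2 bnd in \<open>auto simp: w_def D_def\<close>)
qed

lemma ell_ext_y:
  fixes A B C r x0 y0 :: real
  assumes A: "A > 0" and D: "A * C - B^2 > 0" and r: "r > 0"
  defines "E \<equiv> {(x, y). A * (x-x0)^2 + 2 * B * (x-x0) * (y-y0) + C * (y-y0)^2 = r^2}"
  shows "\<exists>ymax ymin. ymax \<in> snd ` E \<and> ymin \<in> snd ` E \<and> (\<forall>y\<in>snd ` E. ymin \<le> y \<and> y \<le> ymax)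
          \<and> ymax - ymin = 2 * r * sqrt (A / (A * C - B^2))"
proof -
  have C: "C > 0"
  proof (rule ccontr)
    assume "\<not> C > 0" then have "A * C \<le> 0" using A by (simp add: mult_le_0_iff)
    then show False using D by (smt (verit) zero_le_power2)
  qed
  have D': "C * A - B^2 > 0" using D by (simp add: mult.commute)
  have eqq: "\<And>a b. C * (a-y0)^2 + 2 * B * (a-y0) * (b-x0) + A * (b-x0)^2 = A * (b-x0)^2 + 2 * B * (b-x0) * (a-y0) + C * (a-y0)^2"
    by (simp add: algebra_simps)
  have sw: "snd ` E = fst ` {(x, y). C * (x-y0)^2 + 2 * B * (x-y0) * (y-x0) + A * (y-x0)^2 = r^2}"
  proof (intro set_eqI iffI)
    fix z assume "z \<in> snd ` E"
    then obtain x where "(x, z) \<in> E" by force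
    then show "z \<in> fst ` {(x, y). C * (x-y0)^2 + 2 * B * (x-y0) * (y-x0) + A * (y-x0)^2 = r^2}"
      unfolding E_def eqq by force
  next
    fix z assume "z \<in> fst ` {(x, y). C * (x-y0)^2 + 2 * B * (x-y0) * (y-x0) + A * (y-x0)^2 = r^2}"
    then obtain x where "(z, x) \<in> {(x, y). C * (x-y0)^2 + 2 * B * (x-y0) * (y-x0) + A * (y-x0)^2 = r^2}" by force
    then show "z \<in> snd ` E" unfolding E_def eqq by force
  qed
  show ?thesis unfolding sw using ell_ext_x[OF C D' r, of y0 x0] by (simp add: mult.commute)
qed

lemma dsum:
  fixes f g :: "nat \<Rightarrow> real"
  shows "(\<Sum>m\<in>I. \<Sum>n\<in>I. (f m - f n) * (g m - g n))
       = 2 * real (card I) * (\<Sum>m\<in>I. f m * g m) - 2 * (\<Sum>m\<in>I. f m) * (\<Sum>m\<in>I. g m)"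
proof -
  define F where "F = (\<Sum>m\<in>I. f m)"
  define G where "G = (\<Sum>m\<in>I. g m)"
  define H where "H = (\<Sum>m\<in>I. f m * g m)"
  have inner: "(\<Sum>n\<in>I. (f m - f n) * (g m - g n)) = real (card I) * (f m * g m) - f m * G - g m * F + H" for m
  proof -
    have "(\<Sum>n\<in>I. (f m - f n) * (g m - g n)) = (\<Sum>n\<in>I. f m * g m - f m * g n - g m * f n + f n * g n)"
      by (rule sum.cong) (simp_all add: algebra_simps)
    also have "\<dots> = (\<Sum>n\<in>I. f m * g m) - (\<Sum>n\<in>I. f m * g n) - (\<Sum>n\<in>I. g m * f n) + (\<Sum>n\<in>I. f n * g n)"
      by (simp only: sum.distrib sum_subtractf)
    also have "\<dots> = real (card I) * (f m * g m) - f m * G - g m * F + H"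
    proof -
      have e1: "(\<Sum>n\<in>I. f m * g m) = real (card I) * (f m * g m)" by simp
      have e2: "(\<Sum>n\<in>I. f m * g n) = f m * G" unfolding G_def by (simp add: sum_distrib_left)
      have e3: "(\<Sum>n\<in>I. g m * f n) = g m * F" unfolding F_def by (simp add: sum_distrib_left)
      have e4: "(\<Sum>n\<in>I. f n * g n) = H" unfolding H_def ..
      show ?thesis unfolding e1 e2 e3 e4 ..
    qed
    finally show ?thesis .
  qed
  have "(\<Sum>m\<in>I. \<Sum>n\<in>I. (f m - f n) * (g m - g n)) = (\<Sum>m\<in>I. real (card I) * (f m * g m) - f m * G - g m * F + H)"
    by (simp only: inner)
  also have "\<dots> = (\<Sum>m\<in>I. real (card I) * (f m * g m)) - (\<Sum>m\<in>I. f m * G) - (\<Sum>m\<in>I. g m * F) + (\<Sum>m\<in>I. H)"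
    by (simp only: sum.distrib sum_subtractf)
  also have "\<dots> = real (card I) * H - F * G - G * F + real (card I) * H"
  proof -
    have e1: "(\<Sum>m\<in>I. real (card I) * (f m * g m)) = real (card I) * H" unfolding H_def by (simp add: sum_distrib_left)
    have e2: "(\<Sum>m\<in>I. f m * G) = F * G" unfolding F_def by (simp add: sum_distrib_right)
    have e3: "(\<Sum>m\<in>I. g m * F) = G * F" unfolding G_def by (simp add: sum_distrib_right)
    have e4: "(\<Sum>m\<in>I. H) = real (card I) * H" by simp
    show ?thesis unfolding e1 e2 e3 e4 ..
  qed
  also have "\<dots> = 2 * real (card I) * H - 2 * F * G" by (simp add: algebra_simps)
  finally show ?thesis unfolding F_def G_def H_def .
qed

lemma p1id: fixes x :: real shows "x * (x - 1) / 2 + x = (x+1) * (x+1-1) / 2"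
  by (simp add: field_simps)
lemma ps1: "(\<Sum>m\<in>{1..M}. (real m - 1)) = real M * (real M - 1) / 2"
proof (induction M)
  case 0 then show ?case by simp
next
  case (Suc M)
  have "(\<Sum>m\<in>{1..Suc M}. (real m - 1)) = (\<Sum>m\<in>{1..M}. (real m - 1)) + real M" by simp
  also have "\<dots> = (real M+1) * (real M+1-1) / 2"
    unfolding Suc.IH p1id ..
  finally show ?case unfolding of_nat_Suc add.commute[of 1] .
qed
lemma p2id: fixes x :: real shows "(x - 1) * x * (2 * x - 1) / 6 + x^2 = (x+1-1) * (x+1) * (2 * (x+1) - 1) / 6"
  by (simp add: field_simps power2_eq_square)
lemma ps2: "(\<Sum>m\<in>{1..M}. (real m - 1)^2) = (real M - 1) * real M * (2 * real M - 1) / 6"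
proof (induction M)
  case 0 then show ?case by simp
next
  case (Suc M)
  have "(\<Sum>m\<in>{1..Suc M}. (real m - 1)^2) = (\<Sum>m\<in>{1..M}. (real m - 1)^2) + real M ^ 2" by simp
  also have "\<dots> = (real M+1-1) * (real M+1) * (2 * (real M+1) - 1) / 6"
    unfolding Suc.IH p2id ..
  finally show ?case unfolding of_nat_Suc add.commute[of 1] .
qed
lemma p3id: fixes x :: real shows "(x * (x - 1) / 2)^2 + x^3 = ((x+1) * (x+1-1) / 2)^2"
  by (simp add: field_simps power2_eq_square power3_eq_cube)
lemma ps3: "(\<Sum>m\<in>{1..M}. (real m - 1)^3) = (real M * (real M - 1) / 2)^2"
proof (induction M)
  case 0 then show ?case by simp
next
  case (Suc M)
  have "(\<Sum>m\<in>{1..Suc M}. (real m - 1)^3) = (\<Sum>m\<in>{1..M}. (real m - 1)^3) + real M ^ 3" by simp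
  also have "\<dots> = ((real M+1) * (real M+1-1) / 2)^2"
    unfolding Suc.IH p3id ..
  finally show ?case unfolding of_nat_Suc add.commute[of 1] .
qed
lemma p4id: fixes x :: real shows "(x-1) * x * (2 * x-1) * (3 * x^2-3 * x-1) / 30 + x^4 = (x+1-1) * (x+1) * (2 * (x+1)-1) * (3 * (x+1)^2-3 * (x+1)-1) / 30"
  by (simp add: field_simps power2_eq_square power4_eq_xxxx)
lemma ps4: "(\<Sum>m\<in>{1..M}. (real m - 1)^4) = (real M - 1) * real M * (2 * real M - 1) * (3 * real M^2 - 3 * real M - 1) / 30"
proof (induction M)
  case 0 then show ?case by simp
next
  case (Suc M)
  have "(\<Sum>m\<in>{1..Suc M}. (real m - 1)^4) = (\<Sum>m\<in>{1..M}. (real m - 1)^4) + real M ^ 4" by simp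
  also have "\<dots> = (real M+1-1) * (real M+1) * (2 * (real M+1)-1) * (3 * (real M+1)^2-3 * (real M+1)-1) / 30"
    unfolding Suc.IH p4id ..
  finally show ?case unfolding of_nat_Suc add.commute[of 1] .
qed

lemma fin_area: fixes p c fc d RD cs N a b K k :: real
  assumes "p > 0" "c > 0" "fc > 0" "d > 0" "RD > 0" "cs > 0" "N > 0" "a > 0" "b > 0"
    and K: "K = 4 * p^2 / c^2" and k: "k = d^2 * fc / (2 * RD^2)"
  shows "p^2 * N^4 / (K^2 * k^2 * fc^2 * d^2 * cs^2 * (N^4 * a^2 * b / 540)) = 135 * c^4 * RD^4 / (p^2 * fc^4 * d^6 * cs^2 * a^2 * b)"
  using assms unfolding K k by (simp add: field_simps power2_eq_square power4_eq_xxxx eval_nat_numeral)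
lemma fin_R: fixes p c fc d RD cs N a b K k :: real
  assumes "p > 0" "c > 0" "fc > 0" "d > 0" "RD > 0" "cs > 0" "N > 0" "a > 0" "b > 0"
    and K: "K = 4 * p^2 / c^2" and k: "k = d^2 * fc / (2 * RD^2)"
  shows "4 * N^2 * (K * fc^2 * d^2 * cs^2 * (N^2 * a / 6) / (K^2 * k^2 * fc^2 * d^2 * cs^2 * (N^4 * a^2 * b / 540)))
     = 360 * c^2 * RD^4 / (p^2 * fc^2 * d^4 * (a * b))"
  using assms unfolding K k by (simp add: field_simps power2_eq_square power4_eq_xxxx)
lemma fin_T: fixes p c fc d RD cs N a b q K k :: real
  assumes "p > 0" "c > 0" "fc > 0" "d > 0" "RD > 0" "cs > 0" "N > 0" "a > 0" "b > 0"
    and K: "K = 4 * p^2 / c^2" and k: "k = d^2 * fc / (2 * RD^2)"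
  shows "4 * N^2 * (K * k^2 * (N^2 * a * q / 90) / (K^2 * k^2 * fc^2 * d^2 * cs^2 * (N^4 * a^2 * b / 540)))
     = c^2 * (6 * q) / (p^2 * fc^2 * d^2 * cs^2 * (a * b))"
  using assms unfolding K k by (simp add: field_simps power2_eq_square power4_eq_xxxx)

theorem corollary1:
  fixes M :: nat and c fc d RD thD :: real
  assumes hM: "M \<ge> 3" and hc: "c > 0" and hfc: "fc > 0" and hd: "d > 0" and hRD: "RD > 0"
    and hth1: "- (pi/2) < thD" and hth2: "thD < pi/2"
  defines "E \<equiv> {(R, th). Xc M c fc d RD * (R - RD)^2 + 2 * Yc M c fc d RD thD * (R - RD) * (th - thD) + Zc M c fc d thD * (th - thD)^2
                        = (real M)^2}"
  shows "Xc M c fc d RD * Zc M c fc d thD > (Yc M c fc d RD thD)^2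
    \<and> is_ellipse_centred E (RD, thD)
    \<and> measure lebesgue {(R, th). Xc M c fc d RD * (R - RD)^2 + 2 * Yc M c fc d RD thD * (R - RD) * (th - thD)
                                 + Zc M c fc d thD * (th - thD)^2 \<le> (real M)^2}
        = 3 * sqrt 15 * c^2 * RD^2 /
          (pi * fc^2 * d^3 * cos thD * ((real M)^2 - 1) * sqrt ((real M)^2 - 4))
    \<and> (\<exists>Rmax Rmin. Rmax \<in> fst ` E \<and> Rmin \<in> fst ` E
          \<and> (\<forall>r\<in>fst ` E. Rmin \<le> r \<and> r \<le> Rmax)
          \<and> Rmax - Rmin = 6 * sqrt 10 * c * RD^2 /
              (pi * fc * d^2 * sqrt (((real M)^2 - 1) * ((real M)^2 - 4))))
    \<and> (\<exists>tmax tmin. tmax \<in> snd ` E \<and> tmin \<in> snd ` E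
          \<and> (\<forall>t\<in>snd ` E. tmin \<le> t \<and> t \<le> tmax)
          \<and> tmax - tmin = c * sqrt (6 * (16 * (real M)^2 - 30 * real M + 11)) /
              (pi * fc * d * cos thD * sqrt (((real M)^2 - 1) * ((real M)^2 - 4))))"
proof -
  define N where "N = real M"
  define k where "k = d^2 * fc / (2 * RD^2)"
  define K where "K = 4 * pi^2 / c^2"
  define cs where "cs = cos thD"
  have N3: "N \<ge> 3" using hM unfolding N_def by simp
  have r0: "real M > 0" using hM by simp
  have cs0: "cs > 0" unfolding cs_def using hth1 hth2 by (simp add: cos_gt_zero_pi)
  have k0: "k > 0" unfolding k_def using hd hfc hRD by simp
  have K0: "K > 0" unfolding K_def using hc by simp
  define f where "f m = (real m - 1)^2" for m :: nat
  define g where "g m = real m - 1" for m :: nat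
  have cardI: "card {1..M} = M" by simp
  define P2 where "P2 = N^2 * (N^2 - 1) / 6"
  define P3 where "P3 = N^2 * (N-1)^2 * (N+1) / 6"
  define P4 where "P4 = N^2 * (N-1) * (N+1) * (2 * N-1) * (8 * N-11) / 90"
  have ff: "f m * f m = (real m - 1)^4" for m unfolding f_def by (simp add: power2_eq_square power4_eq_xxxx)
  have fg: "f m * g m = (real m - 1)^3" for m unfolding f_def g_def by (simp add: power2_eq_square power3_eq_cube)
  have gg: "g m * g m = (real m - 1)^2" for m unfolding g_def by (simp add: power2_eq_square)
  have sf: "sum f {1..M} = (\<Sum>m\<in>{1..M}. (real m - 1)^2)" unfolding f_def ..
  have sg: "sum g {1..M} = (\<Sum>m\<in>{1..M}. (real m - 1))" unfolding g_def ..
  have xif: "xi d fc RD m = - k * f m" for m unfolding xi_def k_def f_def by simp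
  have sX: "(\<Sum>m\<in>{1..M}. \<Sum>n\<in>{1..M}. (xi d fc RD m - xi d fc RD n)^2) = k^2 * P4"
  proof -
    have "(\<Sum>m\<in>{1..M}. \<Sum>n\<in>{1..M}. (xi d fc RD m - xi d fc RD n)^2)
        = (\<Sum>m\<in>{1..M}. \<Sum>n\<in>{1..M}. k^2 * ((f m - f n) * (f m - f n)))"
      by (intro sum.cong refl) (simp add: xif power2_eq_square algebra_simps)
    also have "\<dots> = k^2 * (\<Sum>m\<in>{1..M}. \<Sum>n\<in>{1..M}. (f m - f n) * (f m - f n))"
      by (simp add: sum_distrib_left)
    also have "(\<Sum>m\<in>{1..M}. \<Sum>n\<in>{1..M}. (f m - f n) * (f m - f n))
        = 2 * N * (\<Sum>m\<in>{1..M}. (real m - 1)^4) - 2 * (\<Sum>m\<in>{1..M}. (real m - 1)^2) * (\<Sum>m\<in>{1..M}. (real m - 1)^2)"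
      unfolding dsum cardI ff sf N_def ..
    also have "\<dots> = P4" unfolding ps4 ps2 N_def[symmetric] P4_def
      by (simp add: field_simps power2_eq_square)
    finally show ?thesis .
  qed
  have sY: "(\<Sum>m\<in>{1..M}. \<Sum>n\<in>{1..M}. (xi d fc RD m - xi d fc RD n) * (real m - real n)) = - k * P3"
  proof -
    have "(\<Sum>m\<in>{1..M}. \<Sum>n\<in>{1..M}. (xi d fc RD m - xi d fc RD n) * (real m - real n))
        = (\<Sum>m\<in>{1..M}. \<Sum>n\<in>{1..M}. (- k) * ((f m - f n) * (g m - g n)))"
      by (intro sum.cong refl) (simp add: xif g_def algebra_simps)
    also have "\<dots> = (- k) * (\<Sum>m\<in>{1..M}. \<Sum>n\<in>{1..M}. (f m - f n) * (g m - g n))"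
      by (simp add: sum_distrib_left)
    also have "(\<Sum>m\<in>{1..M}. \<Sum>n\<in>{1..M}. (f m - f n) * (g m - g n))
        = 2 * N * (\<Sum>m\<in>{1..M}. (real m - 1)^3) - 2 * (\<Sum>m\<in>{1..M}. (real m - 1)^2) * (\<Sum>m\<in>{1..M}. (real m - 1))"
      unfolding dsum cardI fg sf sg N_def ..
    also have "\<dots> = P3" unfolding ps3 ps2 ps1 N_def[symmetric] P3_def
      by (simp add: field_simps power2_eq_square)
    finally show ?thesis by simp
  qed
  have sZ: "(\<Sum>m\<in>{1..M}. \<Sum>n\<in>{1..M}. (real m - real n)^2) = P2"
  proof -
    have "(\<Sum>m\<in>{1..M}. \<Sum>n\<in>{1..M}. (real m - real n)^2)
        = (\<Sum>m\<in>{1..M}. \<Sum>n\<in>{1..M}. (g m - g n) * (g m - g n))"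
      by (intro sum.cong refl) (simp add: g_def power2_eq_square)
    also have "\<dots> = 2 * N * (\<Sum>m\<in>{1..M}. (real m - 1)^2) - 2 * (\<Sum>m\<in>{1..M}. (real m - 1)) * (\<Sum>m\<in>{1..M}. (real m - 1))"
      unfolding dsum cardI gg sg N_def ..
    also have "\<dots> = P2" unfolding ps2 ps1 N_def[symmetric] P2_def
      by (simp add: field_simps power2_eq_square)
    finally show ?thesis .
  qed
  have hX: "Xc M c fc d RD = K * k^2 * P4" unfolding Xc_def sX K_def by simp
  have hY: "Yc M c fc d RD thD = K * d * fc * cs * (- k * P3)" unfolding Yc_def sY K_def cs_def by simp
  have hZ: "Zc M c fc d thD = K * fc^2 * d^2 * cs^2 * P2" unfolding Zc_def sZ K_def cs_def by simp
  have disc: "P4 * P2 - P3^2 = N^4 * (N^2-1)^2 * (N^2-4) / 540"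
    unfolding P2_def P3_def P4_def by (simp add: field_simps power2_eq_square power4_eq_xxxx)
  have W: "Xc M c fc d RD * Zc M c fc d thD - (Yc M c fc d RD thD)^2
        = K^2 * k^2 * fc^2 * d^2 * cs^2 * (N^4 * (N^2-1)^2 * (N^2-4) / 540)"
  proof -
    have "Xc M c fc d RD * Zc M c fc d thD - (Yc M c fc d RD thD)^2 = K^2 * k^2 * fc^2 * d^2 * cs^2 * (P4 * P2 - P3^2)"
      unfolding hX hY hZ by (simp add: power2_eq_square algebra_simps)
    then show ?thesis unfolding disc .
  qed
  have Nm1: "N^2 - 1 > 0" and Nm4: "N^2 - 4 > 0"
  proof -
    have "N^2 \<ge> 3^2" using N3 by (intro power_mono) auto
    then show "N^2 - 1 > 0" "N^2 - 4 > 0" by auto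
  qed
  have N0: "N > 0" using N3 by simp
  have Wpos: "Xc M c fc d RD * Zc M c fc d thD - (Yc M c fc d RD thD)^2 > 0"
    unfolding W using K0 k0 hfc hd cs0 N0 Nm1 Nm4 by simp
  have P4': "P4 = N^2 * (N^2 - 1) * (16 * N^2 - 30 * N + 11) / 90"
    unfolding P4_def by (simp add: power2_eq_square algebra_simps)
  have P4pos: "P4 > 0" unfolding P4_def using N3 by simp
  have Xpos: "Xc M c fc d RD > 0" unfolding hX using K0 k0 P4pos by simp
  have part1: "Xc M c fc d RD * Zc M c fc d thD > (Yc M c fc d RD thD)^2" using Wpos by simp
  have part2: "is_ellipse_centred E (RD, thD)"
    unfolding E_def by (rule ell_shape[OF Xpos Wpos r0])
  define W' where "W' = K^2 * k^2 * fc^2 * d^2 * cs^2 * (N^4 * (N^2-1)^2 * (N^2-4) / 540)"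
  have W'pos: "W' > 0" using Wpos unfolding W W'_def .
  have A3: "pi * N^2 / sqrt W' = 3 * sqrt 15 * c^2 * RD^2 / (pi * fc^2 * d^3 * cs * (N^2 - 1) * sqrt (N^2 - 4))"
  proof (rule power2_eq_imp_eq)
    show "0 \<le> pi * N^2 / sqrt W'" using W'pos by simp
    show "0 \<le> 3 * sqrt 15 * c^2 * RD^2 / (pi * fc^2 * d^3 * cs * (N^2 - 1) * sqrt (N^2 - 4))"
      using hfc hd cs0 Nm1 Nm4 by simp
    have l: "(pi * N^2 / sqrt W')^2 = pi^2 * N^4 / W'"
      using W'pos by (simp add: power_divide power_mult_distrib)
    have r: "(3 * sqrt 15 * c^2 * RD^2 / (pi * fc^2 * d^3 * cs * (N^2 - 1) * sqrt (N^2 - 4)))^2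
         = 135 * c^4 * RD^4 / (pi^2 * fc^4 * d^6 * cs^2 * (N^2 - 1)^2 * (N^2 - 4))"
    proof -
      have s1: "(sqrt 15)^2 = 15" by simp
      have s2: "(sqrt (N^2 - 4))^2 = N^2 - 4" using Nm4 by simp
      have "(3 * sqrt 15 * c^2 * RD^2 / (pi * fc^2 * d^3 * cs * (N^2 - 1) * sqrt (N^2 - 4)))^2
         = 3^2 * (sqrt 15)^2 * (c^2)^2 * (RD^2)^2 / (pi^2 * (fc^2)^2 * (d^3)^2 * cs^2 * (N^2 - 1)^2 * (sqrt (N^2 - 4))^2)"
        by (simp only: power_divide power_mult_distrib)
      also have "\<dots> = 135 * c^4 * RD^4 / (pi^2 * fc^4 * d^6 * cs^2 * (N^2 - 1)^2 * (N^2 - 4))"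
        unfolding s1 s2 by (simp flip: power_mult)
      finally show ?thesis .
    qed
    show "(pi * N^2 / sqrt W')^2 = (3 * sqrt 15 * c^2 * RD^2 / (pi * fc^2 * d^3 * cs * (N^2 - 1) * sqrt (N^2 - 4)))^2"
      using fin_area[OF pi_gt_zero hc hfc hd hRD cs0 N0 Nm1 Nm4 K_def k_def] unfolding l r unfolding W'_def .
  qed
  have part3: "measure lebesgue {(R, th). Xc M c fc d RD * (R - RD)^2 + 2 * Yc M c fc d RD thD * (R - RD) * (th - thD)
                                 + Zc M c fc d thD * (th - thD)^2 \<le> (real M)^2}
        = 3 * sqrt 15 * c^2 * RD^2 /
          (pi * fc^2 * d^3 * cos thD * ((real M)^2 - 1) * sqrt ((real M)^2 - 4))"
  proof -
    have "measure lebesgue {(R, th). Xc M c fc d RD * (R - RD)^2 + 2 * Yc M c fc d RD thD * (R - RD) * (th - thD)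
                                 + Zc M c fc d thD * (th - thD)^2 \<le> (real M)^2}
        = pi * (real M)^2 / sqrt (Xc M c fc d RD * Zc M c fc d thD - (Yc M c fc d RD thD)^2)"
      by (rule ell_measure[OF Xpos Wpos r0])
    also have "\<dots> = pi * N^2 / sqrt W'" unfolding W W'_def N_def ..
    also have "\<dots> = 3 * sqrt 15 * c^2 * RD^2 / (pi * fc^2 * d^3 * cs * (N^2 - 1) * sqrt (N^2 - 4))" by (rule A3)
    also have "\<dots> = 3 * sqrt 15 * c^2 * RD^2 /
          (pi * fc^2 * d^3 * cos thD * ((real M)^2 - 1) * sqrt ((real M)^2 - 4))" unfolding N_def cs_def ..
    finally show ?thesis .
  qed
  have part4: "\<exists>Rmax Rmin. Rmax \<in> fst ` E \<and> Rmin \<in> fst ` E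
          \<and> (\<forall>r\<in>fst ` E. Rmin \<le> r \<and> r \<le> Rmax)
          \<and> Rmax - Rmin = 6 * sqrt 10 * c * RD^2 /
              (pi * fc * d^2 * sqrt (((real M)^2 - 1) * ((real M)^2 - 4)))"
  proof -
    have e: "2 * real M * sqrt (Zc M c fc d thD / (Xc M c fc d RD * Zc M c fc d thD - (Yc M c fc d RD thD)^2))
       = 6 * sqrt 10 * c * RD^2 / (pi * fc * d^2 * sqrt (((real M)^2 - 1) * ((real M)^2 - 4)))"
    proof -
    have "2 * N * sqrt (K * fc^2 * d^2 * cs^2 * P2 / W') = 6 * sqrt 10 * c * RD^2 / (pi * fc * d^2 * sqrt ((N^2 - 1) * (N^2 - 4)))"
    proof (rule power2_eq_imp_eq)
      have P2pos: "P2 > 0" unfolding P2_def using N0 Nm1 by simp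
      show "0 \<le> 2 * N * sqrt (K * fc^2 * d^2 * cs^2 * P2 / W')" using N0 K0 P2pos W'pos by simp
      show "0 \<le> 6 * sqrt 10 * c * RD^2 / (pi * fc * d^2 * sqrt ((N^2 - 1) * (N^2 - 4)))"
        using hc hfc hd Nm1 Nm4 by simp
      have l: "(2 * N * sqrt (K * fc^2 * d^2 * cs^2 * P2 / W'))^2 = 4 * N^2 * (K * fc^2 * d^2 * cs^2 * P2 / W')"
        using W'pos K0 P2pos by (simp add: power_mult_distrib)
      have r: "(6 * sqrt 10 * c * RD^2 / (pi * fc * d^2 * sqrt ((N^2 - 1) * (N^2 - 4))))^2
         = 360 * c^2 * RD^4 / (pi^2 * fc^2 * d^4 * ((N^2 - 1) * (N^2 - 4)))"
      proof -
        have s1: "(sqrt 10)^2 = 10" by simp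
        have s2: "(sqrt ((N^2 - 1) * (N^2 - 4)))^2 = (N^2 - 1) * (N^2 - 4)" using Nm1 Nm4 by simp
        have "(6 * sqrt 10 * c * RD^2 / (pi * fc * d^2 * sqrt ((N^2 - 1) * (N^2 - 4))))^2
           = 6^2 * (sqrt 10)^2 * c^2 * (RD^2)^2 / (pi^2 * fc^2 * (d^2)^2 * (sqrt ((N^2 - 1) * (N^2 - 4)))^2)"
          by (simp only: power_divide power_mult_distrib)
        also have "\<dots> = 360 * c^2 * RD^4 / (pi^2 * fc^2 * d^4 * ((N^2 - 1) * (N^2 - 4)))"
          unfolding s1 s2 by (simp flip: power_mult)
        finally show ?thesis .
      qed
      show "(2 * N * sqrt (K * fc^2 * d^2 * cs^2 * P2 / W'))^2 = (6 * sqrt 10 * c * RD^2 / (pi * fc * d^2 * sqrt ((N^2 - 1) * (N^2 - 4))))^2"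
        using fin_R[OF pi_gt_zero hc hfc hd hRD cs0 N0 Nm1 Nm4 K_def k_def] unfolding l r unfolding W'_def P2_def .
    qed
    then show ?thesis unfolding W unfolding hZ W'_def N_def .
    qed
    show ?thesis using ell_ext_x[OF Xpos Wpos r0, of RD thD] unfolding E_def e .
  qed
  have part5: "\<exists>tmax tmin. tmax \<in> snd ` E \<and> tmin \<in> snd ` E
          \<and> (\<forall>t\<in>snd ` E. tmin \<le> t \<and> t \<le> tmax)
          \<and> tmax - tmin = c * sqrt (6 * (16 * (real M)^2 - 30 * real M + 11)) /
              (pi * fc * d * cos thD * sqrt (((real M)^2 - 1) * ((real M)^2 - 4)))"
  proof -
    have e: "2 * real M * sqrt (Xc M c fc d RD / (Xc M c fc d RD * Zc M c fc d thD - (Yc M c fc d RD thD)^2))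
       = c * sqrt (6 * (16 * (real M)^2 - 30 * real M + 11)) /
              (pi * fc * d * cos thD * sqrt (((real M)^2 - 1) * ((real M)^2 - 4)))"
    proof -
    have "2 * N * sqrt (K * k^2 * P4 / W') = c * sqrt (6 * (16 * N^2 - 30 * N + 11)) / (pi * fc * d * cs * sqrt ((N^2 - 1) * (N^2 - 4)))"
    proof (rule power2_eq_imp_eq)
      have q: "16 * N^2 - 30 * N + 11 > 0"
      proof -
        have "16 * N^2 - 30 * N + 11 = N * (16 * N - 30) + 11" by (simp add: power2_eq_square algebra_simps)
        moreover have "N * (16 * N - 30) \<ge> 0" using N3 by simp
        ultimately show ?thesis by simp
      qed
      show "0 \<le> 2 * N * sqrt (K * k^2 * P4 / W')" using N0 K0 P4pos W'pos by simp
      show "0 \<le> c * sqrt (6 * (16 * N^2 - 30 * N + 11)) / (pi * fc * d * cs * sqrt ((N^2 - 1) * (N^2 - 4)))"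
        using hc hfc hd cs0 Nm1 Nm4 q by simp
      have l: "(2 * N * sqrt (K * k^2 * P4 / W'))^2 = 4 * N^2 * (K * k^2 * P4 / W')"
        using W'pos K0 P4pos by (simp add: power_mult_distrib)
      have r: "(c * sqrt (6 * (16 * N^2 - 30 * N + 11)) / (pi * fc * d * cs * sqrt ((N^2 - 1) * (N^2 - 4))))^2
         = c^2 * (6 * (16 * N^2 - 30 * N + 11)) / (pi^2 * fc^2 * d^2 * cs^2 * ((N^2 - 1) * (N^2 - 4)))"
      proof -
        have s1: "(sqrt (6 * (16 * N^2 - 30 * N + 11)))^2 = 6 * (16 * N^2 - 30 * N + 11)" using q by simp
        have s2: "(sqrt ((N^2 - 1) * (N^2 - 4)))^2 = (N^2 - 1) * (N^2 - 4)" using Nm1 Nm4 by simp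
        have "(c * sqrt (6 * (16 * N^2 - 30 * N + 11)) / (pi * fc * d * cs * sqrt ((N^2 - 1) * (N^2 - 4))))^2
           = c^2 * (sqrt (6 * (16 * N^2 - 30 * N + 11)))^2 / (pi^2 * fc^2 * d^2 * cs^2 * (sqrt ((N^2 - 1) * (N^2 - 4)))^2)"
          by (simp only: power_divide power_mult_distrib)
        also have "\<dots> = c^2 * (6 * (16 * N^2 - 30 * N + 11)) / (pi^2 * fc^2 * d^2 * cs^2 * ((N^2 - 1) * (N^2 - 4)))"
          unfolding s1 s2 ..
        finally show ?thesis .
      qed
      show "(2 * N * sqrt (K * k^2 * P4 / W'))^2 = (c * sqrt (6 * (16 * N^2 - 30 * N + 11)) / (pi * fc * d * cs * sqrt ((N^2 - 1) * (N^2 - 4))))^2"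
        using fin_T[OF pi_gt_zero hc hfc hd hRD cs0 N0 Nm1 Nm4 K_def k_def] unfolding l r unfolding W'_def P4' .
    qed
    then show ?thesis unfolding W unfolding hX W'_def N_def cs_def .
    qed
    show ?thesis using ell_ext_y[OF Xpos Wpos r0, of RD thD] unfolding E_def e .
  qed
  show ?thesis using part1 part2 part3 part4 part5 by blast
qed

end
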